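(* Consider the continuous-variable Deutsch–Jozsa algorithm defined below, with measurement window $\delta=\pi/(2P)$. For every $n$, every $P>0$ and every function $f:\{0,1\}^n\to\{0,1\}$ promised to be constant or balanced, an error probability of $O(e^{-m})$ in deciding whether $f$ is constant or balanced can be achieved by making $O(m)$ independent repetitions of the algorithm (each repetition with a fresh preparation of the initial state and the same oracle $f$), with the hidden constants independent of $N=2^n$ and of $f$.
   Context: Deutsch–Jozsa problem: given $f:\{0,1\}^n\to\{0,1\}$ promised to be either constant (same value on all inputs) or balanced (value $0$ on exactly half of the inputs), decide which. Let $N=2^n$ and let $z=z_1z_2\cdots z_N\in\{0,1\}^N$ be the list of values of $f$ on the inputs in lexicographic order. Continuous-variable (CV) Deutsch–Jozsa algorithm with parameter $P>0$: prepare the position wave function $\phi_0(x)=\frac{\sin(Px)}{\sqrt{\pi P}\,x}$; apply the Fourier transform $\tilde\phi(p)=\frac{1}{\sqrt{2\pi}}\int_{-\infty}^{\infty}e^{\imath p x}\phi(x)\,dx$, giving the momentum wave function equal to $1/\sqrt{2P}$ on $[-P,P]$ and $0$ elsewhere; the oracle multiplies this by $f_z(p)=\sum_{j=1}^{N}(-1)^{z_j}\,\mathbf{1}_{I_j}(p)$, where $[-P,P]$ is partitioned into $N$ consecutive equal intervals $I_1,\dots,I_N$ of width $2P/N$ ordered from $p=+P$ down to $p=-P$ (so $I_j$ is centred at $\frac{N-(2j-1)}{N}P$); then apply the inverse Fourier transform, yielding $$\phi_z(x)=\frac{\sin(Px/N)}{\sqrt{P\pi}\,x}\sum_{j=1}^{N}(-1)^{z_j}\exp\!\Big(\imath\,\tfrac{N-(2j-1)}{N}Px\Big).$$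 Finally measure position and output $1$ ("detection") if the outcome lies in $[-\delta,\delta]$ and $0$ otherwise; thus one run outputs $1$ with probability $\int_{-\delta}^{\delta}|\phi_z(x)|^2\,dx$. Error probability means the probability that the final decision (made from the outcomes of the repetitions) is wrong. *)

theory Defs
  imports "HOL-Analysis.Analysis"
begin

text \<open>The list z of values of f (True = value 1, False = value 0), of length N = 2^n.
  Final position wave function of the CV Deutsch--Jozsa algorithm with parameter P.\<close>
definition cvdj_phi :: "nat \<Rightarrow> real \<Rightarrow> bool list \<Rightarrow> real \<Rightarrow> complex" where
  "cvdj_phi n P z x =
     (let N = (2::nat) ^ n in
      complex_of_real (sin (P * x / real N) / (sqrt (P * pi) * x)) *
      (\<Sum>j = 1..N. (if z ! (j - 1) then -1 else 1) *
          exp (\<i> * complex_of_real ((real N - (2 * real j - 1)) / real N * P * x))))"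

definition cvdj_delta :: "real \<Rightarrow> real" where
  "cvdj_delta P = pi / (2 * P)"

text \<open>Probability that one run outputs 1 (detection in [-delta, delta]).\<close>
definition cvdj_detect_prob :: "nat \<Rightarrow> real \<Rightarrow> bool list \<Rightarrow> real" where
  "cvdj_detect_prob n P z =
     integral {- cvdj_delta P .. cvdj_delta P} (\<lambda>x. (cmod (cvdj_phi n P z x))\<^sup>2)"

definition is_constant_list :: "nat \<Rightarrow> bool list \<Rightarrow> bool" where
  "is_constant_list n z \<longleftrightarrow> length z = 2 ^ n \<and> (\<exists>b. z = replicate (2 ^ n) b)"

definition is_balanced_list :: "nat \<Rightarrow> bool list \<Rightarrow> bool" where
  "is_balanced_list n z \<longleftrightarrow> length z = 2 ^ n \<and>
     2 * card {j. j < 2 ^ n \<and> \<not> z ! j} = 2 ^ n"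

text \<open>Probability of the outcome sequence bs (True = detection) for r independent runs,
  each detecting with probability p.\<close>
definition outcome_prob :: "real \<Rightarrow> bool list \<Rightarrow> real" where
  "outcome_prob p bs = prod_list (map (\<lambda>b. if b then p else 1 - p) bs)"

text \<open>Error probability of the decision rule D (D bs = True means "constant") after r
  independent repetitions on oracle z.\<close>
definition cvdj_error_prob :: "nat \<Rightarrow> real \<Rightarrow> bool list \<Rightarrow> nat \<Rightarrow> (bool list \<Rightarrow> bool) \<Rightarrow> real" where
  "cvdj_error_prob n P z r D =
     (\<Sum>bs \<in> {bs. length bs = r \<and> D bs \<noteq> is_constant_list n z}.
        outcome_prob (cvdj_detect_prob n P z) bs)"

end

theory Submission
  imports Defs
begin


definition cnt :: "bool list \<Rightarrow> nat" where "cnt bs = length (filter id bs)"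

lemma sum_lists_prod:
  "(\<Sum>bs\<in>{bs::bool list. length bs = r}. prod_list (map (\<lambda>b. if b then a else c) bs)) = (a + c :: real) ^ r"
proof (induction r)
  case 0
  have "{bs::bool list. length bs = 0} = {[]}" by auto
  then show ?case by simp
next
  case (Suc r)
  have eq: "{bs::bool list. length bs = Suc r} = (\<lambda>(xs, b). b # xs) ` ({bs. length bs = r} \<times> UNIV)"
    using lists_length_Suc_eq[of UNIV r] by simp
  have inj: "inj_on (\<lambda>(xs, b). b # (xs::bool list)) ({bs. length bs = r} \<times> UNIV)"
    by (auto simp: inj_on_def)
  have fin: "finite {bs::bool list. length bs = r}"
    using finite_lists_length_eq[of "UNIV::bool set" r] by simp
  have "(\<Sum>bs\<in>{bs::bool list. length bs = Suc r}. prod_list (map (\<lambda>b. if b then a else c) bs))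
      = (\<Sum>p\<in>{bs. length bs = r} \<times> UNIV. (if snd p then a else c) * prod_list (map (\<lambda>b. if b then a else c) (fst p)))"
    unfolding eq by (subst sum.reindex[OF inj]) (auto intro!: sum.cong)
  also have "\<dots> = (\<Sum>xs\<in>{bs. length bs = r}. \<Sum>b\<in>UNIV. (if b then a else c) * prod_list (map (\<lambda>b. if b then a else c) xs))"
    by (simp add: sum.cartesian_product case_prod_beta)
  also have "\<dots> = (\<Sum>xs\<in>{bs. length bs = r}. (a + c) * prod_list (map (\<lambda>b. if b then a else c) xs))"
    by (intro sum.cong) (auto simp: UNIV_bool algebra_simps)
  also have "\<dots> = (a + c) ^ Suc r" using Suc by (simp add: sum_distrib_left[symmetric])
  finally show ?case .
qed

lemma outcome_weight:
  "outcome_prob p bs * l ^ cnt bs = prod_list (map (\<lambda>b. if b then p * l else 1 - p) bs)"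
  by (induction bs) (auto simp: outcome_prob_def cnt_def)

lemma outcome_nonneg: "0 \<le> p \<Longrightarrow> p \<le> 1 \<Longrightarrow> 0 \<le> outcome_prob p bs"
  unfolding outcome_prob_def by (induction bs) auto

lemma chernoff_upper:
  assumes "0 \<le> p" "p \<le> 1" "1 \<le> l"
  shows "(\<Sum>bs\<in>{bs. length bs = r \<and> k \<le> cnt bs}. outcome_prob p bs) \<le> (p * l + (1 - p)) ^ r / l ^ k"
proof -
  have fin: "finite {bs::bool list. length bs = r}"
    using finite_lists_length_eq[of "UNIV::bool set" r] by simp
  have "(\<Sum>bs\<in>{bs. length bs = r \<and> k \<le> cnt bs}. outcome_prob p bs)
     \<le> (\<Sum>bs\<in>{bs. length bs = r \<and> k \<le> cnt bs}. outcome_prob p bs * l ^ cnt bs / l ^ k)"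
  proof (rule sum_mono)
    fix bs assume "bs \<in> {bs. length bs = r \<and> k \<le> cnt bs}"
    then have "l ^ k \<le> l ^ cnt bs" using assms by (auto intro: power_increasing)
    moreover have "l ^ k > 0" using assms by simp
    ultimately show "outcome_prob p bs \<le> outcome_prob p bs * l ^ cnt bs / l ^ k"
      using outcome_nonneg[OF assms(1,2), of bs]
      by (simp add: field_simps mult_left_mono)
  qed
  also have "\<dots> \<le> (\<Sum>bs\<in>{bs. length bs = r}. outcome_prob p bs * l ^ cnt bs / l ^ k)"
    using fin outcome_nonneg[OF assms(1,2)] assms by (intro sum_mono2) auto
  also have "\<dots> = (p * l + (1 - p)) ^ r / l ^ k"
    by (simp add: sum_divide_distrib[symmetric] outcome_weight sum_lists_prod)
  finally show ?thesis .
qed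

lemma chernoff_lower:
  assumes "0 \<le> p" "p \<le> 1" "0 < l" "l \<le> 1"
  shows "(\<Sum>bs\<in>{bs. length bs = r \<and> \<not> k \<le> cnt bs}. outcome_prob p bs) \<le> (p * l + (1 - p)) ^ r / l ^ k"
proof -
  have fin: "finite {bs::bool list. length bs = r}"
    using finite_lists_length_eq[of "UNIV::bool set" r] by simp
  have "(\<Sum>bs\<in>{bs. length bs = r \<and> \<not> k \<le> cnt bs}. outcome_prob p bs)
     \<le> (\<Sum>bs\<in>{bs. length bs = r \<and> \<not> k \<le> cnt bs}. outcome_prob p bs * l ^ cnt bs / l ^ k)"
  proof (rule sum_mono)
    fix bs assume "bs \<in> {bs. length bs = r \<and> \<not> k \<le> cnt bs}"
    then have "l ^ k \<le> l ^ cnt bs" using assms by (auto intro: power_decreasing)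
    moreover have "l ^ k > 0" using assms by simp
    ultimately show "outcome_prob p bs \<le> outcome_prob p bs * l ^ cnt bs / l ^ k"
      using outcome_nonneg[OF assms(1,2), of bs]
      by (simp add: field_simps mult_left_mono)
  qed
  also have "\<dots> \<le> (\<Sum>bs\<in>{bs. length bs = r}. outcome_prob p bs * l ^ cnt bs / l ^ k)"
    using fin outcome_nonneg[OF assms(1,2)] assms by (intro sum_mono2) auto
  also have "\<dots> = (p * l + (1 - p)) ^ r / l ^ k"
    by (simp add: sum_divide_distrib[symmetric] outcome_weight sum_lists_prod)
  finally show ?thesis .
qed



lemma telescope_sin:
  fixes t :: real and N :: nat
  shows "complex_of_real (sin t) *
    (\<Sum>j = 1..N. exp (\<i> * complex_of_real ((real N - (2 * real j - 1)) * t)))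
    = complex_of_real (sin (real N * t))"
proof -
  define g where "g j = exp (\<i> * complex_of_real ((real N - 2 * real j) * t))" for j :: nat
  have s: "complex_of_real (sin u) = (exp (\<i> * complex_of_real u) - exp (- (\<i> * complex_of_real u))) / (2 * \<i>)" for u
    by (simp add: sin_exp_eq sin_of_real[symmetric])
  have tm: "(exp (\<i> * complex_of_real t) - exp (- (\<i> * complex_of_real t))) *
      exp (\<i> * complex_of_real ((real N - (2 * real j - 1)) * t)) = g (j - 1) - g j" if "j \<in> {1..N}" for j
  proof -
    have j: "real (j - 1) = real j - 1" using that by auto
    have "(exp (\<i> * complex_of_real t) - exp (- (\<i> * complex_of_real t))) *
      exp (\<i> * complex_of_real ((real N - (2 * real j - 1)) * t))
      = exp (\<i> * complex_of_real t + \<i> * complex_of_real ((real N - (2 * real j - 1)) * t))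
        - exp (- (\<i> * complex_of_real t) + \<i> * complex_of_real ((real N - (2 * real j - 1)) * t))"
      by (simp only: left_diff_distrib exp_add)
    also have "\<dots> = g (j - 1) - g j"
      unfolding g_def j by (intro arg_cong2[where f="(-)"] arg_cong[where f=exp]) (simp_all add: algebra_simps)
    finally show ?thesis .
  qed
  have "complex_of_real (sin t) *
    (\<Sum>j = 1..N. exp (\<i> * complex_of_real ((real N - (2 * real j - 1)) * t)))
    = (\<Sum>j = 1..N. (exp (\<i> * complex_of_real t) - exp (- (\<i> * complex_of_real t))) *
      exp (\<i> * complex_of_real ((real N - (2 * real j - 1)) * t))) / (2 * \<i>)"
    by (subst s) (simp only: sum_distrib_left sum_divide_distrib times_divide_eq_left)
  also have "\<dots> = (\<Sum>j = Suc 0..N. g (j - 1) - g j) / (2 * \<i>)"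
    using tm by (intro arg_cong2[where f="(/)"] sum.cong) auto
  also have "(\<Sum>j = Suc 0..N. g (j - 1) - g j) = - (\<Sum>j = Suc 0..N. g j - g (j - 1))"
    by (simp add: sum_negf[symmetric])
  also have "(\<Sum>j = Suc 0..N. g j - g (j - 1)) = g N - g 0"
    by (rule sum_telescope'') simp
  also have "- (g N - g 0) / (2 * \<i>) = complex_of_real (sin (real N * t))"
    unfolding s g_def by (simp add: algebra_simps)
  finally show ?thesis .
qed



lemma const_phi:
  assumes P: "P > 0" and z: "is_constant_list n z"
  shows "(cmod (cvdj_phi n P z x))\<^sup>2 = (sin (P * x))\<^sup>2 / (P * pi * x\<^sup>2)"
proof -
  define N where "N = (2::nat) ^ n"
  have N0: "real N > 0" unfolding N_def by simp
  obtain b where zb: "z = replicate N b" using z unfolding is_constant_list_def N_def by auto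
  define t where "t = P * x / real N"
  define s :: complex where "s = (if b then -1 else 1)"
  have e: "(real N - (2 * real j - 1)) / real N * P * x = (real N - (2 * real j - 1)) * t" for j
    unfolding t_def using N0 by (simp add: field_simps)
  have sum_eq: "(\<Sum>j = 1..N. (if z ! (j - 1) then -1 else 1) *
          exp (\<i> * complex_of_real ((real N - (2 * real j - 1)) / real N * P * x)))
      = s * (\<Sum>j = 1..N. exp (\<i> * complex_of_real ((real N - (2 * real j - 1)) * t)))"
    unfolding sum_distrib_left s_def e
    by (intro sum.cong) (auto simp: zb)
  have Nt: "real N * t = P * x" unfolding t_def using N0 by simp
  have "cvdj_phi n P z x = s * complex_of_real (1 / (sqrt (P * pi) * x)) *
      (complex_of_real (sin t) * (\<Sum>j = 1..N. exp (\<i> * complex_of_real ((real N - (2 * real j - 1)) * t))))"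
    unfolding cvdj_phi_def Let_def N_def[symmetric] sum_eq t_def[symmetric]
    by (simp add: algebra_simps)
  also have "\<dots> = s * complex_of_real (sin (P * x) / (sqrt (P * pi) * x))"
    unfolding telescope_sin Nt by simp
  finally have "cmod (cvdj_phi n P z x) = \<bar>sin (P * x) / (sqrt (P * pi) * x)\<bar>"
    by (simp add: norm_mult s_def norm_divide del: of_real_mult of_real_divide)
  then have "(cmod (cvdj_phi n P z x))\<^sup>2 = (sin (P * x) / (sqrt (P * pi) * x))\<^sup>2"
    by (metis abs_divide power2_abs)
  also have "\<dots> = (sin (P * x))\<^sup>2 / (P * pi * x\<^sup>2)"
    using P by (simp add: power_divide power_mult_distrib)
  finally show ?thesis .
qed



lemma abs_sum_lemma:
  "(\<Sum>j = 1..2*M. \<bar>real (2*M) - (2 * real j - 1)\<bar>) = 2 * real M ^ 2"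
proof (induction M)
  case 0
  then show ?case by simp
next
  case (Suc M)
  define f where "f j = \<bar>real (2*Suc M) - (2 * real j - 1)\<bar>" for j :: nat
  have "(\<Sum>j = 1..2*Suc M. f j) = (\<Sum>j = 1..Suc (2*M). f j) + f (Suc (Suc (2*M)))"
    by simp
  also have "(\<Sum>j = 1..Suc (2*M). f j) = f 1 + (\<Sum>j = Suc 1..Suc (2*M). f j)"
    by (rule sum.atLeast_Suc_atMost) simp
  also have "(\<Sum>j = Suc 1..Suc (2*M). f j) = (\<Sum>j = 1..2*M. f (Suc j))"
    by (rule sum.shift_bounds_cl_Suc_ivl)
  also have "(\<Sum>j = 1..2*M. f (Suc j)) = (\<Sum>j = 1..2*M. \<bar>real (2*M) - (2 * real j - 1)\<bar>)"
    unfolding f_def by (intro sum.cong) (auto simp: algebra_simps)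
  also have "f 1 = 2 * real M + 1" unfolding f_def by simp
  also have "f (Suc (Suc (2*M))) = 2 * real M + 1" unfolding f_def by simp
  finally show ?case unfolding f_def Suc.IH by (simp add: power2_eq_square algebra_simps)
qed



lemma bal_sum_zero:
  assumes "is_balanced_list n z"
  shows "(\<Sum>j = 1..(2::nat)^n. (if z ! (j - 1) then -1 else 1 :: complex)) = 0"
proof -
  define N where "N = (2::nat) ^ n"
  have c: "2 * card {j. j < N \<and> \<not> z ! j} = N" using assms unfolding is_balanced_list_def N_def by auto
  have "(\<Sum>j = 1..N. (if z ! (j - 1) then -1 else 1 :: complex)) = (\<Sum>j<N. (if z ! j then -1 else 1 :: complex))"
    by (simp add: sum.atLeast1_atMost_eq)
  also have "\<dots> = (\<Sum>j<N. 2 * (if \<not> z ! j then 1 else 0) - 1)"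
    by (intro sum.cong) auto
  also have "\<dots> = 2 * (\<Sum>j<N. (if \<not> z ! j then 1 else 0)) - of_nat N"
    by (simp add: sum_subtractf sum_distrib_left)
  also have "(\<Sum>j<N. (if \<not> z ! j then 1 else 0 :: complex)) = of_nat (card {j. j < N \<and> \<not> z ! j})"
  proof -
    have e: "{j. j < N \<and> \<not> z ! j} = {j \<in> {..<N}. \<not> z ! j}" by auto
    show ?thesis unfolding e by (subst sum.inter_filter[symmetric]) simp_all
  qed
  also have "2 * (of_nat (card {j. j < N \<and> \<not> z ! j}) :: complex) - of_nat N = 0"
    using arg_cong[OF c, of "of_nat :: nat \<Rightarrow> complex"] by simp
  finally show ?thesis unfolding N_def .
qed

lemma bal_even: "is_balanced_list n z \<Longrightarrow> \<exists>M. (2::nat)^n = 2 * M"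
  unfolding is_balanced_list_def by (metis)

lemma norm_exp_minus1: "cmod (exp (\<i> * complex_of_real t) - 1) \<le> \<bar>t\<bar>"
  using dist_exp_i_1[of t] abs_sin_x_le_abs_x[of "t/2"] by simp

lemma bal_phi:
  assumes P: "P > 0" and z: "is_balanced_list n z"
  shows "(cmod (cvdj_phi n P z x))\<^sup>2 \<le> P ^ 3 * x\<^sup>2 / (4 * pi)"
proof (cases "x = 0")
  case True
  then show ?thesis by (simp add: cvdj_phi_def)
next
  case x: False
  define N where "N = (2::nat) ^ n"
  have N0: "real N > 0" unfolding N_def by simp
  obtain M where M: "N = 2 * M" using bal_even[OF z] unfolding N_def by blast
  define a where "a j = (if z ! (j - 1) then -1 else 1 :: complex)" for j
  define th where "th j = (real N - (2 * real j - 1)) / real N * P * x" for j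
  define S where "S = (\<Sum>j = 1..N. a j * exp (\<i> * complex_of_real (th j)))"
  have a0: "(\<Sum>j = 1..N. a j) = 0" using bal_sum_zero[OF z] unfolding a_def N_def .
  have "S = (\<Sum>j = 1..N. a j * (exp (\<i> * complex_of_real (th j)) - 1)) + (\<Sum>j = 1..N. a j)"
    unfolding S_def by (simp add: sum.distrib[symmetric] algebra_simps)
  then have S2: "S = (\<Sum>j = 1..N. a j * (exp (\<i> * complex_of_real (th j)) - 1))" using a0 by simp
  have "cmod S \<le> (\<Sum>j = 1..N. cmod (a j * (exp (\<i> * complex_of_real (th j)) - 1)))"
    unfolding S2 by (rule norm_sum)
  also have "\<dots> \<le> (\<Sum>j = 1..N. \<bar>th j\<bar>)"
    by (intro sum_mono) (simp add: a_def norm_mult norm_exp_minus1)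
  also have "(\<Sum>j = 1..N. \<bar>th j\<bar>) = \<bar>P * x\<bar> / real N * (\<Sum>j = 1..N. \<bar>real N - (2 * real j - 1)\<bar>)"
    unfolding th_def sum_distrib_left using N0 by (intro sum.cong) (auto simp: abs_mult abs_divide)
  also have "(\<Sum>j = 1..N. \<bar>real N - (2 * real j - 1)\<bar>) = 2 * real M ^ 2"
    using abs_sum_lemma[of M] unfolding M by simp
  also have "\<bar>P * x\<bar> / real N * (2 * real M ^ 2) = \<bar>P * x\<bar> * real N / 4 * 2"
    using N0 unfolding M by (simp add: power2_eq_square field_simps)
  finally have Sb: "cmod S \<le> \<bar>P * x\<bar> * real N / 4 * 2" .
  have phi: "cvdj_phi n P z x = complex_of_real (sin (P * x / real N) / (sqrt (P * pi) * x)) * S"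
    unfolding cvdj_phi_def Let_def N_def[symmetric] S_def a_def th_def ..
  have sb: "\<bar>sin (P * x / real N)\<bar> \<le> \<bar>P * x\<bar> / real N"
    using abs_sin_x_le_abs_x[of "P * x / real N"] N0 by (simp add: abs_divide)
  have sq: "sqrt (P * pi) * \<bar>x\<bar> > 0" using P x by simp
  have "cmod (cvdj_phi n P z x) = \<bar>sin (P * x / real N)\<bar> / (sqrt (P * pi) * \<bar>x\<bar>) * cmod S"
    unfolding phi norm_mult norm_of_real using P by (simp add: abs_divide abs_mult)
  also have "\<dots> \<le> (\<bar>P * x\<bar> / real N) / (sqrt (P * pi) * \<bar>x\<bar>) * (\<bar>P * x\<bar> * real N / 4 * 2)"
    using sb Sb sq by (intro mult_mono divide_right_mono) auto
  also have "\<dots> = P ^ 2 * \<bar>x\<bar> / (2 * sqrt (P * pi))"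
    using N0 P x by (simp add: abs_mult power2_eq_square field_simps)
  finally have nb: "cmod (cvdj_phi n P z x) \<le> P ^ 2 * \<bar>x\<bar> / (2 * sqrt (P * pi))" .
  have "(cmod (cvdj_phi n P z x))\<^sup>2 \<le> (P ^ 2 * \<bar>x\<bar> / (2 * sqrt (P * pi)))\<^sup>2"
    using nb by (intro power_mono) auto
  also have "\<dots> = P ^ 3 * x\<^sup>2 / (4 * pi)"
    using P by (simp add: power_divide power_mult_distrib power2_eq_square power3_eq_cube field_simps)
  finally show ?thesis .
qed



lemma sin_lower: "\<bar>sin (u::real) - u\<bar> \<le> \<bar>u\<bar> ^ 3 / 6"
proof -
  have "(\<Sum>m<3. sin_coeff m * u ^ m) = u"
    by (simp add: sin_coeff_def numeral_3_eq_3)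
  moreover have f3: "fact 3 = (6::real)" by (simp add: eval_nat_numeral)
  moreover have "inverse (fact 3) * \<bar>u\<bar> ^ 3 = \<bar>u\<bar> ^ 3 / (6::real)"
    by (simp only: f3 divide_inverse mult.commute)
  ultimately show ?thesis using Maclaurin_sin_bound[of u 3] by simp
qed

lemma sinc_sq_lower:
  assumes "(u::real) \<noteq> 0" "u\<^sup>2 \<le> 6"
  shows "1 - u\<^sup>2 / 3 \<le> (sin u / u)\<^sup>2"
proof -
  have "\<bar>sin u / u - 1\<bar> = \<bar>sin u - u\<bar> / \<bar>u\<bar>" using assms
    by (simp add: abs_divide[symmetric] diff_divide_distrib)
  also have "\<dots> \<le> (\<bar>u\<bar> ^ 3 / 6) / \<bar>u\<bar>" using sin_lower[of u] assms
    by (intro divide_right_mono) auto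
  also have "\<dots> = u\<^sup>2 / 6" using assms by (simp add: power2_eq_square power3_eq_cube)
  finally have a: "1 - u\<^sup>2 / 6 \<le> sin u / u" by linarith
  have b: "0 \<le> 1 - u\<^sup>2 / 6" using assms by simp
  have "(1 - u\<^sup>2 / 6)\<^sup>2 \<le> (sin u / u)\<^sup>2" using a b by (intro power_mono) auto
  moreover have "(1 - u\<^sup>2 / 6)\<^sup>2 = 1 - u\<^sup>2 / 3 + (u\<^sup>2)\<^sup>2 / 36"
    by (simp add: power2_eq_square algebra_simps)
  moreover have "0 \<le> (u\<^sup>2)\<^sup>2" by simp
  ultimately show ?thesis by linarith
qed

lemma ftc_real:
  assumes "a \<le> b" "\<And>x. (F has_real_derivative f x) (at x)"
  shows "(f has_integral (F b - F a)) {a..b}"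
  using assms by (intro fundamental_theorem_of_calculus)
    (auto simp: has_real_derivative_iff_has_vector_derivative[symmetric] intro: has_field_derivative_at_within)

lemma detect_bal:
  assumes P: "P > 0" and z: "is_balanced_list n z"
  shows "0 \<le> cvdj_detect_prob n P z \<and> cvdj_detect_prob n P z \<le> pi\<^sup>2 / 48"
proof -
  define d where "d = pi / (2 * P)"
  have d0: "d > 0" unfolding d_def using P by simp
  define f where "f x = (cmod (cvdj_phi n P z x))\<^sup>2" for x
  have pdef: "cvdj_detect_prob n P z = integral {-d..d} f"
    unfolding cvdj_detect_prob_def cvdj_delta_def d_def f_def ..
  have gi: "((\<lambda>x. P ^ 3 * x\<^sup>2 / (4 * pi)) has_integral
      (P ^ 3 * d ^ 3 / (12 * pi) - P ^ 3 * (-d) ^ 3 / (12 * pi))) {-d..d}"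
    using d0 by (intro ftc_real[where F="\<lambda>x. P^3*x^3/(12*pi)"]) (rule derivative_eq_intros refl | simp)+
  have val: "P ^ 3 * d ^ 3 / (12 * pi) - P ^ 3 * (-d) ^ 3 / (12 * pi) = pi\<^sup>2 / 48"
    unfolding d_def using P by (simp add: power_divide power2_eq_square power3_eq_cube)
  have "integral {-d..d} f \<le> pi\<^sup>2 / 48"
  proof (cases "f integrable_on {-d..d}")
    case True
    show ?thesis
      using has_integral_le[OF integrable_integral[OF True] gi] bal_phi[OF P z] unfolding val f_def
      by auto
  next
    case False
    then show ?thesis by (simp add: not_integrable_integral)
  qed
  moreover have "0 \<le> integral {-d..d} f"
  proof (cases "f integrable_on {-d..d}")
    case True
    then show ?thesis by (intro integral_nonneg) (auto simp: f_def)
  next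
    case False
    then show ?thesis by (simp add: not_integrable_integral)
  qed
  ultimately show ?thesis unfolding pdef by simp
qed



lemma detect_const:
  assumes P: "P > 0" and z: "is_constant_list n z"
  shows "1 - pi\<^sup>2 / 36 \<le> cvdj_detect_prob n P z \<and> cvdj_detect_prob n P z \<le> 1"
proof -
  define d where "d = pi / (2 * P)"
  have d0: "d > 0" unfolding d_def using P by simp
  define h where "h x = (sin (P * x))\<^sup>2 / (P * pi * x\<^sup>2)" for x
  have pdef: "cvdj_detect_prob n P z = integral {-d..d} h"
    unfolding cvdj_detect_prob_def cvdj_delta_def d_def h_def const_phi[OF P z] ..
  have hb: "\<bar>h x\<bar> \<le> P / pi" for x
  proof (cases "x = 0")
    case True then show ?thesis using P by (simp add: h_def)
  next
    case False
    have "(sin (P * x))\<^sup>2 \<le> (P * x)\<^sup>2"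
      using abs_sin_x_le_abs_x[of "P * x"] by (metis abs_ge_zero power_mono power2_abs)
    then have "(sin (P * x))\<^sup>2 / (P * pi * x\<^sup>2) \<le> (P * x)\<^sup>2 / (P * pi * x\<^sup>2)"
      using P False by (intro divide_right_mono) auto
    also have "\<dots> = P / pi" using P False by (simp add: power2_eq_square)
    finally show ?thesis using P by (simp add: h_def abs_mult)
  qed
  have ci: "((\<lambda>x. P / pi) has_integral (P / pi * d - P / pi * (-d))) {-d..d}"
    using d0 by (intro ftc_real[where F="\<lambda>x. P / pi * x"]) (rule derivative_eq_intros refl | simp)+
  have hmeas: "h \<in> borel_measurable (lebesgue_on {-d..d})"
    unfolding h_def by (intro measurable_restrict_space1 measurable_completion) simp
  have hint: "h integrable_on {-d..d}"
    by (rule measurable_bounded_by_integrable_imp_integrable_real[OF hmeas _ hb]) (use ci in auto)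
  have up: "integral {-d..d} h \<le> 1"
  proof -
    have "integral {-d..d} h \<le> P / pi * d - P / pi * (-d)"
      using has_integral_le[OF integrable_integral[OF hint] ci] hb by (auto simp: abs_le_iff)
    also have "\<dots> = 1" unfolding d_def using P by simp
    finally show ?thesis .
  qed
  define h2 where "h2 x = (if x = 0 then P / pi else h x)" for x
  have h2i: "(h2 has_integral integral {-d..d} h) {-d..d}"
    by (rule has_integral_spike[OF negligible_sing[of 0] _ integrable_integral[OF hint]]) (simp add: h2_def)
  have gi: "((\<lambda>x. P / pi * (1 - P\<^sup>2 * x\<^sup>2 / 3)) has_integral
      (P / pi * (d - P\<^sup>2 * d ^ 3 / 9) - P / pi * ((-d) - P\<^sup>2 * (-d) ^ 3 / 9))) {-d..d}"
    using d0 by (intro ftc_real[where F="\<lambda>x. P / pi * (x - P\<^sup>2 * x ^ 3 / 9)"]) (rule derivative_eq_intros refl | simp)+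
  have val: "P / pi * (d - P\<^sup>2 * d ^ 3 / 9) - P / pi * ((-d) - P\<^sup>2 * (-d) ^ 3 / 9) = 1 - pi\<^sup>2 / 36"
    unfolding d_def using P by (simp add: power_divide power2_eq_square power3_eq_cube field_simps)
  have pw: "P / pi * (1 - P\<^sup>2 * x\<^sup>2 / 3) \<le> h2 x" if x: "x \<in> {-d..d}" for x
  proof (cases "x = 0")
    case True then show ?thesis by (simp add: h2_def)
  next
    case False
    define u where "u = P * x"
    have u0: "u \<noteq> 0" using False P unfolding u_def by simp
    have "\<bar>u\<bar> \<le> pi / 2" using x P unfolding u_def d_def by (auto simp: abs_mult field_simps abs_le_iff)
    then have "u\<^sup>2 \<le> (pi / 2)\<^sup>2" by (metis abs_ge_zero power_mono power2_abs)
    also have "(pi / 2)\<^sup>2 \<le> 6"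
    proof -
      have "pi * pi \<le> 4 * 4" using pi_less_4 pi_gt_zero by (intro mult_mono) auto
      then show ?thesis by (simp add: power2_eq_square)
    qed
    finally have u6: "u\<^sup>2 \<le> 6" .
    have "P / pi * (1 - P\<^sup>2 * x\<^sup>2 / 3) = P / pi * (1 - u\<^sup>2 / 3)" unfolding u_def by (simp add: power_mult_distrib)
    also have "\<dots> \<le> P / pi * (sin u / u)\<^sup>2"
      using sinc_sq_lower[OF u0 u6] P by (intro mult_left_mono) auto
    also have "\<dots> = h x" unfolding h_def u_def using P False by (simp add: power2_eq_square field_simps)
    finally show ?thesis using False by (simp add: h2_def)
  qed
  have lo: "1 - pi\<^sup>2 / 36 \<le> integral {-d..d} h"
    using has_integral_le[OF gi h2i] pw unfolding val by auto
  show ?thesis unfolding pdef using up lo by simp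
qed



lemma bal_not_const: "is_balanced_list n z \<Longrightarrow> \<not> is_constant_list n z"
proof
  assume b: "is_balanced_list n z" and c: "is_constant_list n z"
  then obtain v where zv: "z = replicate (2^n) v" unfolding is_constant_list_def by auto
  have "{j. j < 2 ^ n \<and> \<not> z ! j} = (if v then {} else {..<2^n})" using zv by auto
  then have "2 * card (if v then {} else {..<(2::nat)^n}) = 2^n" using b unfolding is_balanced_list_def by simp
  then show False by (cases v) auto
qed

lemma pow_split: "(x::real) ^ (9 * m) / y ^ (4 * m) = (x ^ 9 / y ^ 4) ^ m"
  by (simp only: power_mult power_divide)

lemma pi_sq: "pi\<^sup>2 \<le> 9.87"
proof -
  have "pi * pi \<le> 3.1416 * 3.1416" using pi_approx pi_gt_zero by (intro mult_mono) auto
  then show ?thesis by (simp add: power2_eq_square)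
qed

lemma third_le_exp: "(1/3::real) \<le> exp (-1)"
  using exp_le by (simp add: exp_minus field_simps)

lemma pow_bound:
  assumes "0 \<le> q" "q \<le> 1/3"
  shows "q ^ m \<le> exp (- real m)"
proof -
  have "q ^ m \<le> exp (-1) ^ m" using assms third_le_exp by (intro power_mono) auto
  also have "\<dots> = exp (- real m)" by (simp add: exp_of_nat_mult[symmetric])
  finally show ?thesis .
qed

theorem theorem2:
  shows "\<exists>C K :: real. C > 0 \<and> K > 0 \<and>
    (\<forall>n P (m::nat). P > 0 \<longrightarrow> m \<ge> 1 \<longrightarrow>
      (\<exists>r D. real r \<le> K * real m \<and>
        (\<forall>z. is_constant_list n z \<or> is_balanced_list n z \<longrightarrow>
           cvdj_error_prob n P z r D \<le> C * exp (- real m))))"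
proof (rule exI[of _ 1], rule exI[of _ 9], intro conjI allI impI)
  fix n m :: nat and P :: real
  assume P: "P > 0" and m: "m \<ge> 1"
  define D where "D bs = (4 * m \<le> cnt bs)" for bs
  show "\<exists>r D. real r \<le> 9 * real m \<and>
        (\<forall>z. is_constant_list n z \<or> is_balanced_list n z \<longrightarrow>
           cvdj_error_prob n P z r D \<le> 1 * exp (- real m))"
  proof -
  have "\<forall>z. is_constant_list n z \<or> is_balanced_list n z \<longrightarrow>
           cvdj_error_prob n P z (9 * m) D \<le> 1 * exp (- real m)"
  proof (intro allI impI)
    fix z assume z: "is_constant_list n z \<or> is_balanced_list n z"
    define p where "p = cvdj_detect_prob n P z"
    show "cvdj_error_prob n P z (9 * m) D \<le> 1 * exp (- real m)"
    proof (cases "is_constant_list n z")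
      case True
      have pb: "1 - pi\<^sup>2 / 36 \<le> p" "p \<le> 1" using detect_const[OF P True] unfolding p_def by auto
      have p72: "0.72 \<le> p" using pb(1) pi_sq by simp
      have set: "{bs. length bs = 9 * m \<and> D bs \<noteq> is_constant_list n z} = {bs. length bs = 9 * m \<and> \<not> 4 * m \<le> cnt bs}"
        using True by (auto simp: D_def)
      have "cvdj_error_prob n P z (9 * m) D \<le> (p * (1/2) + (1 - p)) ^ (9 * m) / (1/2) ^ (4 * m)"
        unfolding cvdj_error_prob_def set p_def[symmetric]
        by (rule chernoff_lower) (use pb p72 in auto)
      also have "\<dots> = ((1 - p / 2) ^ 9 * 16) ^ m"
      proof -
        have h: "(1/2::real)^4 = 1/16" by (simp add: power_divide)
        have "(1 - p / 2) ^ 9 / (1 / 2) ^ 4 = (1 - p / 2) ^ 9 * (16::real)" unfolding h by simp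
        moreover have "p * (1/2) + (1 - p) = 1 - p / 2" by simp
        ultimately show ?thesis by (simp only: pow_split)
      qed
      also have "\<dots> \<le> exp (- real m)"
      proof (rule pow_bound)
        show "0 \<le> (1 - p / 2) ^ 9 * 16" using pb by simp
        have "(1 - p / 2) ^ 9 \<le> 0.64 ^ 9" using pb p72 by (intro power_mono) auto
        then show "(1 - p / 2) ^ 9 * 16 \<le> 1/3" by (simp add: power_divide)
      qed
      finally show ?thesis by simp
    next
      case False
      then have b: "is_balanced_list n z" using z by simp
      have pb: "0 \<le> p" "p \<le> pi\<^sup>2 / 48" using detect_bal[OF P b] unfolding p_def by auto
      have p21: "p \<le> 0.21" using pb(2) pi_sq by simp
      have set: "{bs. length bs = 9 * m \<and> D bs \<noteq> is_constant_list n z} = {bs. length bs = 9 * m \<and> 4 * m \<le> cnt bs}"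
        using False by (auto simp: D_def)
      have "cvdj_error_prob n P z (9 * m) D \<le> (p * (5/2) + (1 - p)) ^ (9 * m) / (5/2) ^ (4 * m)"
        unfolding cvdj_error_prob_def set p_def[symmetric]
        by (rule chernoff_upper) (use pb p21 in auto)
      also have "\<dots> = ((1 + 3 * p / 2) ^ 9 / (5/2) ^ 4) ^ m"
        unfolding pow_split by (simp add: algebra_simps)
      also have "\<dots> \<le> exp (- real m)"
      proof (rule pow_bound)
        show "0 \<le> (1 + 3 * p / 2) ^ 9 / (5/2) ^ 4" using pb by simp
        have "(1 + 3 * p / 2) ^ 9 \<le> 1.315 ^ 9" using pb p21 by (intro power_mono) auto
        then show "(1 + 3 * p / 2) ^ 9 / (5/2) ^ 4 \<le> 1/3" by (simp add: power_divide)
      qed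
      finally show ?thesis by simp
    qed
  qed
  then show ?thesis by (intro exI[of _ "9 * m"] exI[of _ D]) simp
  qed
qed simp_all

end
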